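(* Let $T>0$ and $\beta>0$ be fixed. Then for every $R>0$, \[ \lim_{\mu\to 0}\ \sup_{|x|_{H^\beta}+\sqrt{\mu}\,|y|_{H}\leq R}\ \sup_{t\in[0,T]} \left|\Pi_1 S_\mu(t)(x,y)-S(t)x\right|_{H}=0, \] where the inner supremum is over $x\in H^\beta$, $y\in H$.
   Context: Let $D\subset\mathbb{R}^d$ be a bounded open domain with smooth boundary and $H=L^2(D)$ with norm $|\cdot|_H$ and inner product $\langle\cdot,\cdot\rangle_H$. Let $A$ be the realization in $H$ of the Laplacian with Dirichlet boundary conditions; let $\{e_k\}_{k\in\mathbb{N}}$ be a complete orthonormal system of $H$ and $0<\alpha_1\le\alpha_2\le\cdots\to\infty$ with $Ae_k=-\alpha_k e_k$. For $\beta\in\mathbb{R}$, $H^\beta$ is the completion of $C_0(D)$ with respect to $|x|_{H^\beta}^2=\sum_k \alpha_k^\beta|\langle x,e_k\rangle_H|^2$, and $\mathcal{H}_\beta:=H^\beta\times H^{\beta-1}$, with $\Pi_1(x,y)=x$, $\Pi_2(x,y)=y$. $S(t)$, $t\ge0$, denotes the semigroup generated by $A$. For $\mu>0$ let $A_\mu(x,y)=\frac1\mu(\mu y, Ax-y)$; it generates a strongly continuous group $S_\mu(t)$ on every $\mathcal{H}_\beta$ (these are compatible with each other); note $(x,y)\in H^\beta\times H\subset \mathcal{H}_0$ for $\beta>0$. *)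

theory Defs
  imports "HOL-Analysis.Analysis"
begin

text \<open>H = L^2(D) is represented by coefficient sequences with respect to
  the orthonormal eigenbasis e_k of the Dirichlet Laplacian (indexed from 0), and
  alpha k are the corresponding eigenvalues: A e_k = - alpha k e_k.\<close>

definition dirichlet_spectrum :: "(nat \<Rightarrow> real) \<Rightarrow> bool" where
  "dirichlet_spectrum \<alpha> \<longleftrightarrow> 0 < \<alpha> 0 \<and> mono \<alpha> \<and> filterlim \<alpha> at_top sequentially"

definition Hnorm :: "(nat \<Rightarrow> real) \<Rightarrow> real \<Rightarrow> (nat \<Rightarrow> real) \<Rightarrow> real" where
  "Hnorm \<alpha> \<beta> x = sqrt (\<Sum>k. \<alpha> k powr \<beta> * (x k)\<^sup>2)"

definition inH :: "(nat \<Rightarrow> real) \<Rightarrow> real \<Rightarrow> (nat \<Rightarrow> real) \<Rightarrow> bool" where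
  "inH \<alpha> \<beta> x \<longleftrightarrow> summable (\<lambda>k. \<alpha> k powr \<beta> * (x k)\<^sup>2)"

definition L2norm :: "(nat \<Rightarrow> real) \<Rightarrow> real" where
  "L2norm x = sqrt (\<Sum>k. (x k)\<^sup>2)"

definition heat_sg :: "(nat \<Rightarrow> real) \<Rightarrow> real \<Rightarrow> (nat \<Rightarrow> real) \<Rightarrow> (nat \<Rightarrow> real)" where
  "heat_sg \<alpha> t x = (\<lambda>k. exp (- \<alpha> k * t) * x k)"

text \<open>Restriction of A_mu(x,y) = (1/mu)(mu y, A x - y) to the k-th eigenmode
  (coefficient pair (x_k, y_k)).\<close>
definition mode_gen :: "(nat \<Rightarrow> real) \<Rightarrow> real \<Rightarrow> nat \<Rightarrow> real \<times> real \<Rightarrow> real \<times> real" where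
  "mode_gen \<alpha> \<mu> k z = (snd z, (- \<alpha> k * fst z - snd z) / \<mu>)"

definition mode_exp :: "(nat \<Rightarrow> real) \<Rightarrow> real \<Rightarrow> nat \<Rightarrow> real \<Rightarrow> real \<times> real \<Rightarrow> real \<times> real" where
  "mode_exp \<alpha> \<mu> k t z = (\<Sum>n. (t ^ n / fact n) *\<^sub>R ((mode_gen \<alpha> \<mu> k ^^ n) z))"

definition damped_group :: "(nat \<Rightarrow> real) \<Rightarrow> real \<Rightarrow> real \<Rightarrow> (nat \<Rightarrow> real) \<times> (nat \<Rightarrow> real)
    \<Rightarrow> (nat \<Rightarrow> real) \<times> (nat \<Rightarrow> real)" where
  "damped_group \<alpha> \<mu> t xy =
     ((\<lambda>k. fst (mode_exp \<alpha> \<mu> k t (fst xy k, snd xy k))),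
      (\<lambda>k. snd (mode_exp \<alpha> \<mu> k t (fst xy k, snd xy k))))"

end

theory Submission
  imports Defs
begin

lemma mode_gen_norm:
  assumes "\<mu> > 0"
  shows "norm (mode_gen \<alpha> \<mu> k w) \<le> (1 + (\<bar>\<alpha> k\<bar> + 1) / \<mu>) * norm w"
proof -
  have f: "\<bar>fst w\<bar> \<le> norm w" and s: "\<bar>snd w\<bar> \<le> norm w"
    using norm_fst_le[of "fst w" "snd w"] norm_snd_le[of "snd w" "fst w"] by auto
  have "norm (mode_gen \<alpha> \<mu> k w) \<le> \<bar>snd w\<bar> + \<bar>(- \<alpha> k * fst w - snd w) / \<mu>\<bar>"
    unfolding mode_gen_def using norm_Pair_le by (metis real_norm_def)
  also have "\<bar>(- \<alpha> k * fst w - snd w) / \<mu>\<bar> = \<bar>- \<alpha> k * fst w - snd w\<bar> / \<mu>"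
    using assms by simp
  also have "\<bar>- \<alpha> k * fst w - snd w\<bar> \<le> \<bar>\<alpha> k\<bar> * norm w + norm w"
  proof -
    have "\<bar>- \<alpha> k * fst w - snd w\<bar> \<le> \<bar>\<alpha> k\<bar> * \<bar>fst w\<bar> + \<bar>snd w\<bar>"
      by (simp add: abs_mult abs_triangle_ineq4 order_trans[OF abs_triangle_ineq4])
    also have "\<dots> \<le> \<bar>\<alpha> k\<bar> * norm w + norm w"
      using f s by (intro add_mono mult_left_mono) auto
    finally show ?thesis .
  qed
  hence "\<bar>- \<alpha> k * fst w - snd w\<bar> / \<mu> \<le> (\<bar>\<alpha> k\<bar> * norm w + norm w) / \<mu>"
    using assms by (simp add: divide_right_mono)
  finally have "norm (mode_gen \<alpha> \<mu> k w) \<le> norm w + (\<bar>\<alpha> k\<bar> + 1) * norm w / \<mu>"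
    using s by (simp add: algebra_simps)
  thus ?thesis by (simp add: algebra_simps)
qed

lemma mode_gen_pow_norm:
  assumes "\<mu> > 0"
  shows "norm ((mode_gen \<alpha> \<mu> k ^^ n) w) \<le> (1 + (\<bar>\<alpha> k\<bar> + 1) / \<mu>) ^ n * norm w"
proof (induction n)
  case 0 then show ?case by simp
next
  case (Suc n)
  let ?L = "1 + (\<bar>\<alpha> k\<bar> + 1) / \<mu>"
  have L: "?L \<ge> 0" using assms by simp
  have "norm ((mode_gen \<alpha> \<mu> k ^^ Suc n) w) \<le> ?L * norm ((mode_gen \<alpha> \<mu> k ^^ n) w)"
    using mode_gen_norm[OF assms] by simp
  also have "\<dots> \<le> ?L * (?L ^ n * norm w)" using Suc L by (rule mult_left_mono)
  finally show ?case by simp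
qed

lemma expser:
  fixes c :: "nat \<Rightarrow> real"
  assumes "\<And>n. \<bar>c n\<bar> \<le> C * L ^ n" "0 \<le> L"
  shows "summable (\<lambda>n. (c n / fact n) * t ^ n)"
    "DERIV (\<lambda>t. \<Sum>n. (c n / fact n) * t ^ n) t :> (\<Sum>n. (c (Suc n) / fact n) * t ^ n)"
proof -
  have sm: "summable (\<lambda>n. (c n / fact n) * s ^ n)" for s :: real
  proof (rule summable_comparison_test'[where N=0])
    show "summable (\<lambda>n. C * (inverse (fact n) * (L * \<bar>s\<bar>) ^ n))"
      by (intro summable_mult summable_exp)
    fix n :: nat
    have "norm ((c n / fact n) * s ^ n) = \<bar>c n\<bar> * (inverse (fact n) * \<bar>s\<bar> ^ n)"
      by (simp add: abs_mult power_abs divide_inverse)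
    also have "\<dots> \<le> (C * L ^ n) * (inverse (fact n) * \<bar>s\<bar> ^ n)"
      using assms(1) by (intro mult_right_mono) auto
    finally show "norm ((c n / fact n) * s ^ n) \<le> C * (inverse (fact n) * (L * \<bar>s\<bar>) ^ n)"
      by (simp add: power_mult_distrib algebra_simps)
  qed
  thus "summable (\<lambda>n. (c n / fact n) * t ^ n)" .
  have d: "diffs (\<lambda>n. c n / fact n) = (\<lambda>n. c (Suc n) / fact n)"
    by (rule ext) (simp add: diffs_def fact_Suc field_simps del: of_nat_Suc)
  have "DERIV (\<lambda>t. \<Sum>n. (c n / fact n) * t ^ n) t :> (\<Sum>n. diffs (\<lambda>n. c n / fact n) n * t ^ n)"
    by (rule termdiffs_strong[OF sm[of "\<bar>t\<bar> + 1"]]) simp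
  thus "DERIV (\<lambda>t. \<Sum>n. (c n / fact n) * t ^ n) t :> (\<Sum>n. (c (Suc n) / fact n) * t ^ n)"
    by (simp add: d)
qed

lemma mode_exp_ode:
  assumes mu: "\<mu> > 0"
  shows "fst (mode_exp \<alpha> \<mu> k 0 z) = fst z" "snd (mode_exp \<alpha> \<mu> k 0 z) = snd z"
    "DERIV (\<lambda>t. fst (mode_exp \<alpha> \<mu> k t z)) t :> snd (mode_exp \<alpha> \<mu> k t z)"
    "DERIV (\<lambda>t. snd (mode_exp \<alpha> \<mu> k t z)) t :>
       (- \<alpha> k * fst (mode_exp \<alpha> \<mu> k t z) - snd (mode_exp \<alpha> \<mu> k t z)) / \<mu>"
proof -
  define g where "g = mode_gen \<alpha> \<mu> k"
  define L where "L = 1 + (\<bar>\<alpha> k\<bar> + 1) / \<mu>"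
  define a where "a n = fst ((g ^^ n) z)" for n
  define b where "b n = snd ((g ^^ n) z)" for n
  have L0: "0 \<le> L" unfolding L_def using mu by simp
  have pn: "norm ((g ^^ n) z) \<le> L ^ n * norm z" for n
    unfolding g_def L_def by (rule mode_gen_pow_norm[OF mu])
  have ab: "\<bar>a n\<bar> \<le> norm z * L ^ n" "\<bar>b n\<bar> \<le> norm z * L ^ n" for n
    using pn[of n] norm_fst_le[of "fst ((g ^^ n) z)" "snd ((g ^^ n) z)"]
      norm_snd_le[of "snd ((g ^^ n) z)" "fst ((g ^^ n) z)"]
    unfolding a_def b_def by (auto simp: mult.commute)
  have aS: "a (Suc n) = b n" for n unfolding a_def b_def g_def by (simp add: mode_gen_def)
  have bS: "b (Suc n) = (- \<alpha> k * a n - b n) / \<mu>" for n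
    unfolding a_def b_def g_def by (simp add: mode_gen_def)
  have rep: "mode_exp \<alpha> \<mu> k t z = ((\<Sum>n. (a n / fact n) * t ^ n), (\<Sum>n. (b n / fact n) * t ^ n))" for t
  proof -
    let ?F = "\<lambda>n. (t ^ n / fact n) *\<^sub>R ((g ^^ n) z)"
    have "summable (\<lambda>n. norm (?F n))"
    proof (rule summable_comparison_test'[where N=0])
      show "summable (\<lambda>n. norm z * (inverse (fact n) * (L * \<bar>t\<bar>) ^ n))"
        by (intro summable_mult summable_exp)
      fix n :: nat
      have "norm (norm (?F n)) = (inverse (fact n) * \<bar>t\<bar> ^ n) * norm ((g ^^ n) z)"
        by (simp add: power_abs divide_inverse abs_mult)
      also have "\<dots> \<le> (inverse (fact n) * \<bar>t\<bar> ^ n) * (L ^ n * norm z)"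
        by (intro mult_left_mono pn) auto
      finally show "norm (norm (?F n)) \<le> norm z * (inverse (fact n) * (L * \<bar>t\<bar>) ^ n)"
        by (simp add: power_mult_distrib algebra_simps)
    qed
    hence sF: "summable ?F" by (rule summable_norm_cancel)
    have "fst (suminf ?F) = (\<Sum>n. fst (?F n))"
      by (rule bounded_linear.suminf[OF bounded_linear_fst sF])
    moreover have "snd (suminf ?F) = (\<Sum>n. snd (?F n))"
      by (rule bounded_linear.suminf[OF bounded_linear_snd sF])
    ultimately show ?thesis
      unfolding mode_exp_def g_def[symmetric] a_def b_def
      by (simp add: prod_eq_iff mult.commute)
  qed
  show "fst (mode_exp \<alpha> \<mu> k 0 z) = fst z" "snd (mode_exp \<alpha> \<mu> k 0 z) = snd z"
    unfolding rep using powser_zero[of "\<lambda>n. a n / fact n"] powser_zero[of "\<lambda>n. b n / fact n"]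
    by (simp_all del: powser_zero add: a_def b_def)
  have da: "DERIV (\<lambda>t. \<Sum>n. (a n / fact n) * t ^ n) t :> (\<Sum>n. (a (Suc n) / fact n) * t ^ n)"
    by (rule expser(2)[OF ab(1) L0])
  thus "DERIV (\<lambda>t. fst (mode_exp \<alpha> \<mu> k t z)) t :> snd (mode_exp \<alpha> \<mu> k t z)"
    unfolding rep by (simp add: aS)
  have db: "DERIV (\<lambda>t. \<Sum>n. (b n / fact n) * t ^ n) t :> (\<Sum>n. (b (Suc n) / fact n) * t ^ n)"
    by (rule expser(2)[OF ab(2) L0])
  have sa: "summable (\<lambda>n. (a n / fact n) * t ^ n)" by (rule expser(1)[OF ab(1) L0])
  have sb: "summable (\<lambda>n. (b n / fact n) * t ^ n)" by (rule expser(1)[OF ab(2) L0])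
  have "(\<Sum>n. (b (Suc n) / fact n) * t ^ n)
      = (\<Sum>n. (- \<alpha> k / \<mu>) * ((a n / fact n) * t ^ n) - (1 / \<mu>) * ((b n / fact n) * t ^ n))"
    using mu by (intro suminf_cong) (simp add: bS field_simps)
  also have "\<dots> = (- \<alpha> k / \<mu>) * (\<Sum>n. (a n / fact n) * t ^ n) - (1 / \<mu>) * (\<Sum>n. (b n / fact n) * t ^ n)"
    using suminf_diff[OF summable_mult[OF sa, of "- \<alpha> k / \<mu>"] summable_mult[OF sb, of "1 / \<mu>"]]
      suminf_mult[OF sa, of "- \<alpha> k / \<mu>"] suminf_mult[OF sb, of "1 / \<mu>"]
    by simp
  also have "\<dots> = (- \<alpha> k * (\<Sum>n. (a n / fact n) * t ^ n) - (\<Sum>n. (b n / fact n) * t ^ n)) / \<mu>"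
    using mu by (simp add: field_simps)
  finally show "DERIV (\<lambda>t. snd (mode_exp \<alpha> \<mu> k t z)) t :>
       (- \<alpha> k * fst (mode_exp \<alpha> \<mu> k t z) - snd (mode_exp \<alpha> \<mu> k t z)) / \<mu>"
    using db unfolding rep by simp
qed

lemma cmp:
  fixes F G F' G' :: "real \<Rightarrow> real"
  assumes "0 \<le> s" "\<And>t. 0 \<le> t \<Longrightarrow> t \<le> s \<Longrightarrow> DERIV F t :> F' t"
    "\<And>t. 0 \<le> t \<Longrightarrow> t \<le> s \<Longrightarrow> DERIV G t :> G' t"
    "\<And>t. 0 \<le> t \<Longrightarrow> t \<le> s \<Longrightarrow> \<bar>F' t\<bar> \<le> G' t"
  shows "\<bar>F s - F 0\<bar> \<le> G s - G 0"
proof -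
  have "(\<lambda>t. G t - F t) 0 \<le> (\<lambda>t. G t - F t) s"
  proof (rule DERIV_nonneg_imp_nondecreasing[OF assms(1)])
    fix t assume "0 \<le> t" "t \<le> s"
    thus "\<exists>y. DERIV (\<lambda>t. G t - F t) t :> y \<and> 0 \<le> y"
      using DERIV_diff[OF assms(3) assms(2)] assms(4)[of t] by (intro exI[of _ "G' t - F' t"]) (auto simp: abs_le_iff)
  qed
  moreover have "(\<lambda>t. G t + F t) 0 \<le> (\<lambda>t. G t + F t) s"
  proof (rule DERIV_nonneg_imp_nondecreasing[OF assms(1)])
    fix t assume "0 \<le> t" "t \<le> s"
    thus "\<exists>y. DERIV (\<lambda>t. G t + F t) t :> y \<and> 0 \<le> y"
      using DERIV_add[OF assms(3) assms(2)] assms(4)[of t] by (intro exI[of _ "G' t + F' t"]) (auto simp: abs_le_iff)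
  qed
  ultimately show ?thesis by simp
qed

lemma ode_est:
  fixes u v :: "real \<Rightarrow> real" and a \<mu> t :: real
  assumes a: "a > 0" and mu: "\<mu> > 0"
    and du: "\<And>t. DERIV u t :> v t"
    and dv: "\<And>t. DERIV v t :> (- a * u t - v t) / \<mu>"
    and t: "t \<ge> 0"
  shows "\<bar>u t\<bar> \<le> sqrt ((u 0)\<^sup>2 + \<mu> * (v 0)\<^sup>2 / a)"
    "\<bar>u t - exp (- a * t) * u 0\<bar> \<le> 3 * \<mu> * \<bar>v 0\<bar> + 2 * \<mu> * a * sqrt ((u 0)\<^sup>2 + \<mu> * (v 0)\<^sup>2 / a)"
proof -
  define B where "B = sqrt ((u 0)\<^sup>2 + \<mu> * (v 0)\<^sup>2 / a)"
  have B0: "B \<ge> 0" unfolding B_def using a mu by simp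
  have ub: "\<bar>u s\<bar> \<le> B" if s: "s \<ge> 0" for s
  proof -
    have "(\<lambda>t. a * (u t)\<^sup>2 + \<mu> * (v t)\<^sup>2) s \<le> (\<lambda>t. a * (u t)\<^sup>2 + \<mu> * (v t)\<^sup>2) 0"
    proof (rule DERIV_nonpos_imp_nonincreasing[OF s])
      fix r :: real
      have "DERIV (\<lambda>t. a * (u t)\<^sup>2 + \<mu> * (v t)\<^sup>2) r :> a * (2 * u r * v r) + \<mu> * (2 * v r * ((- a * u r - v r) / \<mu>))"
        by (auto intro!: derivative_eq_intros du dv)
      moreover have "a * (2 * u r * v r) + \<mu> * (2 * v r * ((- a * u r - v r) / \<mu>)) = - 2 * (v r)\<^sup>2"
        using mu by (simp add: field_simps power2_eq_square)
      ultimately show "\<exists>y. DERIV (\<lambda>t. a * (u t)\<^sup>2 + \<mu> * (v t)\<^sup>2) r :> y \<and> y \<le> 0"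
        by (intro exI[of _ "- 2 * (v r)\<^sup>2"]) simp
    qed
    hence "a * (u s)\<^sup>2 \<le> a * (u 0)\<^sup>2 + \<mu> * (v 0)\<^sup>2"
      using mu by (simp add: add_increasing2 order_trans[rotated])
    hence "(u s)\<^sup>2 \<le> (u 0)\<^sup>2 + \<mu> * (v 0)\<^sup>2 / a"
      using a by (simp add: field_simps)
    hence "sqrt ((u s)\<^sup>2) \<le> B" unfolding B_def by (rule real_sqrt_le_mono)
    thus ?thesis by simp
  qed
  thus "\<bar>u t\<bar> \<le> sqrt ((u 0)\<^sup>2 + \<mu> * (v 0)\<^sup>2 / a)" using t B_def by simp
  define Q where "Q = \<mu> * \<bar>v 0\<bar> + \<mu> * a * B"
  have vb: "\<bar>\<mu> * v s\<bar> \<le> Q" if s: "s \<ge> 0" for s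
  proof -
    have "\<bar>(\<lambda>t. exp (t / \<mu>) * (\<mu> * v t)) s - (\<lambda>t. exp (t / \<mu>) * (\<mu> * v t)) 0\<bar>
        \<le> (\<lambda>t. \<mu> * a * B * exp (t / \<mu>)) s - (\<lambda>t. \<mu> * a * B * exp (t / \<mu>)) 0"
    proof (rule cmp[OF s])
      fix r :: real assume r: "0 \<le> r" "r \<le> s"
      have "DERIV (\<lambda>t. exp (t / \<mu>) * (\<mu> * v t)) r :>
          exp (r / \<mu>) * (1 / \<mu>) * (\<mu> * v r) + exp (r / \<mu>) * (\<mu> * ((- a * u r - v r) / \<mu>))"
        by (auto intro!: derivative_eq_intros du dv)
      moreover have "exp (r / \<mu>) * (1 / \<mu>) * (\<mu> * v r) + exp (r / \<mu>) * (\<mu> * ((- a * u r - v r) / \<mu>))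
          = exp (r / \<mu>) * (- a * u r)"
        using mu by (simp add: field_simps)
      ultimately show "DERIV (\<lambda>t. exp (t / \<mu>) * (\<mu> * v t)) r :> exp (r / \<mu>) * (- a * u r)" by simp
      show "DERIV (\<lambda>t. \<mu> * a * B * exp (t / \<mu>)) r :> a * B * exp (r / \<mu>)"
        using mu by (auto intro!: derivative_eq_intros simp: field_simps)
      have "\<bar>exp (r / \<mu>) * (- a * u r)\<bar> = exp (r / \<mu>) * (a * \<bar>u r\<bar>)"
        using a by (simp add: abs_mult)
      also have "\<dots> \<le> exp (r / \<mu>) * (a * B)"
        using ub[OF r(1)] a by (intro mult_left_mono) auto
      finally show "\<bar>exp (r / \<mu>) * (- a * u r)\<bar> \<le> a * B * exp (r / \<mu>)" by (simp add: algebra_simps)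
    qed
    hence h: "\<bar>exp (s / \<mu>) * (\<mu> * v s) - \<mu> * v 0\<bar> \<le> \<mu> * a * B * (exp (s / \<mu>) - 1)"
      by (simp add: algebra_simps)
    define e where "e = exp (s / \<mu>)"
    have e1: "e \<ge> 1" unfolding e_def using s mu by simp
    have "e * \<bar>\<mu> * v s\<bar> \<le> \<bar>\<mu> * v 0\<bar> + \<mu> * a * B * (e - 1)"
    proof -
      have "\<bar>e * (\<mu> * v s)\<bar> = e * \<bar>\<mu> * v s\<bar>" using e1 by (simp add: abs_mult)
      moreover have "\<bar>e * (\<mu> * v s)\<bar> \<le> \<bar>e * (\<mu> * v s) - \<mu> * v 0\<bar> + \<bar>\<mu> * v 0\<bar>"
        using abs_triangle_ineq[of "e * (\<mu> * v s) - \<mu> * v 0" "\<mu> * v 0"] by simp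
      ultimately show ?thesis using h unfolding e_def[symmetric] by linarith
    qed
    also have "\<dots> \<le> e * Q"
    proof -
      have P: "\<mu> * a * B \<ge> 0" using mu a B0 by simp
      have A1: "\<mu> * \<bar>v 0\<bar> \<le> e * (\<mu> * \<bar>v 0\<bar>)" using mult_right_mono[OF e1, of "\<mu> * \<bar>v 0\<bar>"] mu by simp
      have A2: "\<mu> * a * B * (e - 1) \<le> e * (\<mu> * a * B)" using P e1 by (simp add: algebra_simps)
      have A3: "\<bar>\<mu> * v 0\<bar> = \<mu> * \<bar>v 0\<bar>" using mu by (simp add: abs_mult)
      show ?thesis unfolding Q_def distrib_left using A1 A2 A3 by linarith
    qed
    finally show ?thesis using e1 by (simp add: mult_le_cancel_left_pos)
  qed
  define z where "z s = \<mu> * v s + u s - exp (- a * s) * u 0" for s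
  have "\<bar>(\<lambda>t. exp (a * t) * z t) t - (\<lambda>t. exp (a * t) * z t) 0\<bar>
        \<le> (\<lambda>t. Q * exp (a * t)) t - (\<lambda>t. Q * exp (a * t)) 0"
  proof (rule cmp[OF t])
    fix r :: real assume r: "0 \<le> r" "r \<le> t"
    have "DERIV (\<lambda>t. exp (a * t) * z t) r :>
          exp (a * r) * a * z r + exp (a * r) * (\<mu> * ((- a * u r - v r) / \<mu>) + v r - (exp (- a * r) * (- a)) * u 0)"
      unfolding z_def by (auto intro!: derivative_eq_intros du dv)
    moreover have "exp (a * r) * a * z r + exp (a * r) * (\<mu> * ((- a * u r - v r) / \<mu>) + v r - (exp (- a * r) * (- a)) * u 0)
          = exp (a * r) * (a * (\<mu> * v r))"
      using mu unfolding z_def by (simp add: field_simps)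
    ultimately show "DERIV (\<lambda>t. exp (a * t) * z t) r :> exp (a * r) * (a * (\<mu> * v r))" by simp
    show "DERIV (\<lambda>t. Q * exp (a * t)) r :> a * Q * exp (a * r)"
      by (auto intro!: derivative_eq_intros simp: field_simps)
    have "\<bar>exp (a * r) * (a * (\<mu> * v r))\<bar> = exp (a * r) * a * \<bar>\<mu> * v r\<bar>"
      using a by (simp add: abs_mult)
    also have "\<dots> \<le> exp (a * r) * a * Q"
      using vb[OF r(1)] a by (intro mult_left_mono) auto
    finally show "\<bar>exp (a * r) * (a * (\<mu> * v r))\<bar> \<le> a * Q * exp (a * r)" by (simp add: algebra_simps)
  qed
  hence h: "\<bar>exp (a * t) * z t - \<mu> * v 0\<bar> \<le> Q * (exp (a * t) - 1)"
    unfolding z_def by (simp add: algebra_simps)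
  define e where "e = exp (a * t)"
  have e1: "e \<ge> 1" unfolding e_def using t a by simp
  have Q0: "Q \<ge> 0" unfolding Q_def using mu a B0 by simp
  have "e * \<bar>z t\<bar> \<le> \<bar>\<mu> * v 0\<bar> + Q * (e - 1)"
  proof -
    have "\<bar>e * z t\<bar> = e * \<bar>z t\<bar>" using e1 by (simp add: abs_mult)
    moreover have "\<bar>e * z t\<bar> \<le> \<bar>e * z t - \<mu> * v 0\<bar> + \<bar>\<mu> * v 0\<bar>"
      using abs_triangle_ineq[of "e * z t - \<mu> * v 0" "\<mu> * v 0"] by simp
    ultimately show ?thesis using h unfolding e_def[symmetric] by linarith
  qed
  also have "\<dots> \<le> e * (\<mu> * \<bar>v 0\<bar> + Q)"
  proof -
    have A1: "\<mu> * \<bar>v 0\<bar> \<le> e * (\<mu> * \<bar>v 0\<bar>)" using mult_right_mono[OF e1, of "\<mu> * \<bar>v 0\<bar>"] mu by simp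
    have A2: "Q * (e - 1) \<le> e * Q" using Q0 e1 by (simp add: algebra_simps)
    have A3: "\<bar>\<mu> * v 0\<bar> = \<mu> * \<bar>v 0\<bar>" using mu by (simp add: abs_mult)
    show ?thesis unfolding distrib_left using A1 A2 A3 by linarith
  qed
  finally have zb: "\<bar>z t\<bar> \<le> \<mu> * \<bar>v 0\<bar> + Q" using e1 by (simp add: mult_le_cancel_left_pos)
  have "\<bar>u t - exp (- a * t) * u 0\<bar> = \<bar>z t - \<mu> * v t\<bar>" unfolding z_def by simp
  also have "\<dots> \<le> \<bar>z t\<bar> + \<bar>\<mu> * v t\<bar>" by (rule abs_triangle_ineq4)
  also have "\<dots> \<le> 3 * \<mu> * \<bar>v 0\<bar> + 2 * \<mu> * a * B"
    using zb vb[OF t] unfolding Q_def by simp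
  finally show "\<bar>u t - exp (- a * t) * u 0\<bar> \<le> 3 * \<mu> * \<bar>v 0\<bar> + 2 * \<mu> * a * sqrt ((u 0)\<^sup>2 + \<mu> * (v 0)\<^sup>2 / a)"
    unfolding B_def .
qed

lemma mode_sq:
  fixes a \<mu> N \<alpha>0 \<beta> w x y B :: real
  assumes a: "\<alpha>0 \<le> a" and a0: "\<alpha>0 > 0" and mu: "\<mu> > 0" and N: "N > 0" and be: "\<beta> > 0"
    and B: "B = sqrt (x\<^sup>2 + \<mu> * y\<^sup>2 / a)"
    and h1: "\<bar>w\<bar> \<le> 3 * \<mu> * \<bar>y\<bar> + 2 * \<mu> * a * B"
    and h2: "\<bar>w\<bar> \<le> B + \<bar>x\<bar>"
  shows "w\<^sup>2 \<le> (4 / N powr \<beta> + 2 / N + 8 * \<mu>\<^sup>2 * N\<^sup>2 / \<alpha>0 powr \<beta> + 18 * \<mu> + 8 * \<mu>\<^sup>2 * N)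
           * (a powr \<beta> * x\<^sup>2 + \<mu> * y\<^sup>2)"
proof -
  define X where "X = a powr \<beta> * x\<^sup>2"
  define Y where "Y = \<mu> * y\<^sup>2"
  have apos: "a > 0" using a a0 by simp
  have X0: "X \<ge> 0" and Y0: "Y \<ge> 0" unfolding X_def Y_def using mu by auto
  have "0 \<le> \<mu> * y\<^sup>2 / a" using mu apos by simp
  hence B2: "B\<^sup>2 = x\<^sup>2 + \<mu> * y\<^sup>2 / a" unfolding B by (simp add: add_nonneg_nonneg)
  have B2: "B\<^sup>2 = x\<^sup>2 + \<mu> * y\<^sup>2 / a" unfolding B using mu apos by simp
  have c0: "0 \<le> 4 / N powr \<beta>" "0 \<le> 2 / N" "0 \<le> 8 * \<mu>\<^sup>2 * N\<^sup>2 / \<alpha>0 powr \<beta>" "0 \<le> 18 * \<mu>" "0 \<le> 8 * \<mu>\<^sup>2 * N"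
    using N mu a0 by auto
  have sq: "(p + q)\<^sup>2 \<le> 2 * p\<^sup>2 + 2 * q\<^sup>2" for p q :: real
    using sum_squares_ge_zero[of "p - q" 0] by (simp add: power2_eq_square algebra_simps)
  have wsq: "w\<^sup>2 \<le> r\<^sup>2" if "\<bar>w\<bar> \<le> r" for r
    using that by (metis abs_ge_zero abs_le_square_iff abs_of_nonneg order_trans power2_abs)
  show ?thesis
  proof (cases "a \<le> N")
    case True
    have "w\<^sup>2 \<le> (3 * \<mu> * \<bar>y\<bar> + 2 * \<mu> * a * B)\<^sup>2" by (rule wsq[OF h1])
    also have "\<dots> \<le> 2 * (3 * \<mu> * \<bar>y\<bar>)\<^sup>2 + 2 * (2 * \<mu> * a * B)\<^sup>2" by (rule sq)
    also have "\<dots> = 18 * \<mu> * Y + 8 * \<mu>\<^sup>2 * a\<^sup>2 * x\<^sup>2 + 8 * \<mu>\<^sup>2 * a * Y"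
      unfolding Y_def power_mult_distrib B2 using apos by (simp add: power2_eq_square field_simps)
    also have "\<dots> \<le> 18 * \<mu> * Y + (8 * \<mu>\<^sup>2 * N\<^sup>2 / \<alpha>0 powr \<beta>) * X + 8 * \<mu>\<^sup>2 * N * Y"
    proof -
      have "a\<^sup>2 \<le> N\<^sup>2" using True apos by (simp add: power_mono)
      moreover have "x\<^sup>2 \<le> X / \<alpha>0 powr \<beta>"
      proof -
        have "\<alpha>0 powr \<beta> \<le> a powr \<beta>" using a a0 be by (simp add: powr_mono2)
        hence "\<alpha>0 powr \<beta> * x\<^sup>2 \<le> X" unfolding X_def by (simp add: mult_right_mono)
        thus ?thesis using a0 by (simp add: field_simps)
      qed
      ultimately have "a\<^sup>2 * x\<^sup>2 \<le> N\<^sup>2 * (X / \<alpha>0 powr \<beta>)" by (intro mult_mono) auto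
      hence 1: "8 * \<mu>\<^sup>2 * (a\<^sup>2 * x\<^sup>2) \<le> 8 * \<mu>\<^sup>2 * (N\<^sup>2 * (X / \<alpha>0 powr \<beta>))"
        by (intro mult_left_mono) auto
      have 2: "8 * \<mu>\<^sup>2 * a * Y \<le> 8 * \<mu>\<^sup>2 * N * Y"
        using True Y0 by (intro mult_right_mono mult_left_mono) auto
      show ?thesis using 1 2 by (simp add: algebra_simps)
    qed
    also have "\<dots> \<le> (4 / N powr \<beta> + 2 / N + 8 * \<mu>\<^sup>2 * N\<^sup>2 / \<alpha>0 powr \<beta> + 18 * \<mu> + 8 * \<mu>\<^sup>2 * N) * (X + Y)"
      using c0 X0 Y0 mult_nonneg_nonneg[OF c0(1) X0] mult_nonneg_nonneg[OF c0(1) Y0]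
        mult_nonneg_nonneg[OF c0(2) X0] mult_nonneg_nonneg[OF c0(2) Y0]
        mult_nonneg_nonneg[OF c0(3) Y0] mult_nonneg_nonneg[OF c0(4) X0] mult_nonneg_nonneg[OF c0(5) X0]
      unfolding distrib_left distrib_right by linarith
    finally show ?thesis unfolding X_def Y_def .
  next
    case False
    have "w\<^sup>2 \<le> (B + \<bar>x\<bar>)\<^sup>2" by (rule wsq[OF h2])
    also have "\<dots> \<le> 2 * B\<^sup>2 + 2 * \<bar>x\<bar>\<^sup>2" by (rule sq)
    also have "\<dots> = 4 * x\<^sup>2 + 2 * Y / a" unfolding B2 Y_def by (simp add: algebra_simps)
    also have "\<dots> \<le> (4 / N powr \<beta>) * X + (2 / N) * Y"
    proof -
      have "N powr \<beta> \<le> a powr \<beta>" using False N be by (simp add: powr_mono2)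
      hence "N powr \<beta> * x\<^sup>2 \<le> X" unfolding X_def by (simp add: mult_right_mono)
      hence 1: "4 * x\<^sup>2 \<le> (4 / N powr \<beta>) * X" using N by (simp add: field_simps)
      have "Y / a \<le> Y / N" using False N Y0 by (simp add: divide_left_mono)
      thus ?thesis using 1 by simp
    qed
    also have "\<dots> \<le> (4 / N powr \<beta> + 2 / N + 8 * \<mu>\<^sup>2 * N\<^sup>2 / \<alpha>0 powr \<beta> + 18 * \<mu> + 8 * \<mu>\<^sup>2 * N) * (X + Y)"
      using c0 X0 Y0 mult_nonneg_nonneg[OF c0(1) Y0]
        mult_nonneg_nonneg[OF c0(2) X0] mult_nonneg_nonneg[OF c0(3) X0]
        mult_nonneg_nonneg[OF c0(3) Y0] mult_nonneg_nonneg[OF c0(4) X0] mult_nonneg_nonneg[OF c0(5) X0]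
        mult_nonneg_nonneg[OF c0(4) Y0] mult_nonneg_nonneg[OF c0(5) Y0]
      unfolding distrib_left distrib_right by linarith
    finally show ?thesis unfolding X_def Y_def .
  qed
qed

theorem lemma3p2:
  fixes \<alpha> :: "nat \<Rightarrow> real" and T \<beta> :: real
  assumes "dirichlet_spectrum \<alpha>" and "T > 0" and "\<beta> > 0"
  shows "\<forall>R>0. \<forall>\<epsilon>>0. \<exists>\<delta>>0. \<forall>\<mu>. 0 < \<mu> \<and> \<mu> < \<delta> \<longrightarrow>
           (\<forall>x y. inH \<alpha> \<beta> x \<and> inH \<alpha> 0 y \<and> Hnorm \<alpha> \<beta> x + sqrt \<mu> * L2norm y \<le> R \<longrightarrow>
              (\<forall>t\<in>{0..T}. L2norm (\<lambda>k. fst (damped_group \<alpha> \<mu> t (x, y)) k - heat_sg \<alpha> t x k) \<le> \<epsilon>))"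
proof (intro allI impI)
  fix R \<epsilon> :: real assume R: "R > 0" and ep: "\<epsilon> > 0"
  have be: "\<beta> > 0" using assms(3) .
  define a0 where "a0 = \<alpha> 0"
  have a0: "a0 > 0" using assms(1) unfolding dirichlet_spectrum_def a0_def by simp
  have ak: "a0 \<le> \<alpha> k" for k using assms(1) unfolding dirichlet_spectrum_def a0_def mono_def by simp
  have akp: "\<alpha> k > 0" for k using ak[of k] a0 by simp
  define M where "M = R\<^sup>2 / \<epsilon>\<^sup>2"
  have M0: "M > 0" unfolding M_def using R ep by simp
  define N where "N = max ((16 * M) powr (1 / \<beta>)) (8 * M) + 1"
  have N0: "N > 0" unfolding N_def using M0 by (simp add: max_def)
  have NM1: "4 / N powr \<beta> * R\<^sup>2 \<le> \<epsilon>\<^sup>2 / 4"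
  proof -
    have "(16 * M) powr (1 / \<beta>) \<le> N" unfolding N_def by simp
    hence "((16 * M) powr (1 / \<beta>)) powr \<beta> \<le> N powr \<beta>" using be by (intro powr_mono2) auto
    hence "16 * M \<le> N powr \<beta>" using be M0 by (simp add: powr_powr)
    hence "16 * R\<^sup>2 \<le> \<epsilon>\<^sup>2 * N powr \<beta>" unfolding M_def using ep by (simp add: field_simps)
    moreover have "N powr \<beta> > 0" using N0 by simp
    ultimately show ?thesis by (simp add: field_simps)
  qed
  have NM2: "2 / N * R\<^sup>2 \<le> \<epsilon>\<^sup>2 / 4"
  proof -
    have "8 * M \<le> N" unfolding N_def by simp
    hence "8 * R\<^sup>2 \<le> \<epsilon>\<^sup>2 * N" unfolding M_def using ep by (simp add: field_simps)
    thus ?thesis using N0 by (simp add: field_simps)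
  qed
  define K where "K = 8 * N\<^sup>2 / a0 powr \<beta> + 18 + 8 * N"
  have K0: "K > 0" unfolding K_def using N0 a0 by (simp add: add_pos_nonneg)
  define \<delta> where "\<delta> = min 1 (\<epsilon>\<^sup>2 / (2 * K * R\<^sup>2))"
  show "\<exists>\<delta>>0. \<forall>\<mu>. 0 < \<mu> \<and> \<mu> < \<delta> \<longrightarrow>
           (\<forall>x y. inH \<alpha> \<beta> x \<and> inH \<alpha> 0 y \<and> Hnorm \<alpha> \<beta> x + sqrt \<mu> * L2norm y \<le> R \<longrightarrow>
              (\<forall>t\<in>{0..T}. L2norm (\<lambda>k. fst (damped_group \<alpha> \<mu> t (x, y)) k - heat_sg \<alpha> t x k) \<le> \<epsilon>))"
  proof (intro exI[of _ \<delta>] conjI allI impI ballI)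
    show "\<delta> > 0" unfolding \<delta>_def using ep K0 R by simp
    fix \<mu> x y t
    assume mu: "0 < \<mu> \<and> \<mu> < \<delta>"
      and xy: "inH \<alpha> \<beta> x \<and> inH \<alpha> 0 y \<and> Hnorm \<alpha> \<beta> x + sqrt \<mu> * L2norm y \<le> R"
      and t: "t \<in> {0..T}"
    have mu0: "\<mu> > 0" and mu1: "\<mu> \<le> 1" and muK: "\<mu> \<le> \<epsilon>\<^sup>2 / (2 * K * R\<^sup>2)"
      using mu unfolding \<delta>_def by auto
    have t0: "t \<ge> 0" using t by simp
    define c where "c = 4 / N powr \<beta> + 2 / N + 8 * \<mu>\<^sup>2 * N\<^sup>2 / a0 powr \<beta> + 18 * \<mu> + 8 * \<mu>\<^sup>2 * N"
    define w where "w k = fst (damped_group \<alpha> \<mu> t (x, y)) k - heat_sg \<alpha> t x k" for k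
    have c0: "c \<ge> 0" unfolding c_def using N0 a0 mu0 by simp
    have wb: "(w k)\<^sup>2 \<le> c * (\<alpha> k powr \<beta> * (x k)\<^sup>2 + \<mu> * (y k)\<^sup>2)" for k
    proof -
      define u where "u s = fst (mode_exp \<alpha> \<mu> k s (x k, y k))" for s
      define v where "v s = snd (mode_exp \<alpha> \<mu> k s (x k, y k))" for s
      have u0: "u 0 = x k" and v0: "v 0 = y k"
        unfolding u_def v_def using mode_exp_ode(1,2)[OF mu0, of \<alpha> k "(x k, y k)"] by auto
      have du: "DERIV u s :> v s" for s unfolding u_def v_def by (rule mode_exp_ode(3)[OF mu0])
      have dv: "DERIV v s :> (- \<alpha> k * u s - v s) / \<mu>" for s
        unfolding u_def v_def by (rule mode_exp_ode(4)[OF mu0])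
      note E = ode_est[OF akp mu0 du dv t0, unfolded u0 v0]
      have weq: "w k = u t - exp (- \<alpha> k * t) * x k"
        unfolding w_def u_def damped_group_def heat_sg_def by simp
      have h1: "\<bar>w k\<bar> \<le> 3 * \<mu> * \<bar>y k\<bar> + 2 * \<mu> * \<alpha> k * sqrt ((x k)\<^sup>2 + \<mu> * (y k)\<^sup>2 / \<alpha> k)"
        using E(2) weq by simp
      have "\<bar>exp (- \<alpha> k * t) * x k\<bar> \<le> \<bar>x k\<bar>"
      proof -
        have "exp (- \<alpha> k * t) \<le> 1" using akp[of k] t0 by (simp add: mult_nonneg_nonneg)
        thus ?thesis by (simp add: abs_mult mult_left_le_one_le)
      qed
      hence h2: "\<bar>w k\<bar> \<le> sqrt ((x k)\<^sup>2 + \<mu> * (y k)\<^sup>2 / \<alpha> k) + \<bar>x k\<bar>"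
        using E(1) weq abs_triangle_ineq4[of "u t" "exp (- \<alpha> k * t) * x k"] by linarith
      show ?thesis unfolding c_def
        by (rule mode_sq[OF ak a0 mu0 N0 be refl h1 h2])
    qed
    have sx: "summable (\<lambda>k. \<alpha> k powr \<beta> * (x k)\<^sup>2)" using xy unfolding inH_def by simp
    have sy: "summable (\<lambda>k. (y k)\<^sup>2)"
    proof -
      have "summable (\<lambda>k. \<alpha> k powr 0 * (y k)\<^sup>2)" using xy unfolding inH_def by simp
      moreover have "\<alpha> k powr 0 = 1" for k using akp[of k] by simp
      ultimately show ?thesis by simp
    qed
    have sr: "summable (\<lambda>k. c * (\<alpha> k powr \<beta> * (x k)\<^sup>2 + \<mu> * (y k)\<^sup>2))"
      by (intro summable_mult summable_add sx sy)
    have sw: "summable (\<lambda>k. (w k)\<^sup>2)"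
      by (rule summable_comparison_test'[OF sr, of 0]) (simp add: wb)
    define Sx where "Sx = (\<Sum>k. \<alpha> k powr \<beta> * (x k)\<^sup>2)"
    define Sy where "Sy = (\<Sum>k. (y k)\<^sup>2)"
    have Sx0: "Sx \<ge> 0" unfolding Sx_def using akp by (intro suminf_nonneg sx) simp
    have Sy0: "Sy \<ge> 0" unfolding Sy_def by (intro suminf_nonneg sy) simp
    have "(\<Sum>k. (w k)\<^sup>2) \<le> (\<Sum>k. c * (\<alpha> k powr \<beta> * (x k)\<^sup>2 + \<mu> * (y k)\<^sup>2))"
      by (rule suminf_le[OF wb sw sr])
    also have "\<dots> = c * (Sx + \<mu> * Sy)"
      unfolding Sx_def Sy_def
      using suminf_mult[OF summable_add[OF sx summable_mult[OF sy, of \<mu>]], of c]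
        suminf_add[OF sx summable_mult[OF sy, of \<mu>]] suminf_mult[OF sy, of \<mu>]
      by simp
    also have "\<dots> \<le> c * R\<^sup>2"
    proof (rule mult_left_mono[OF _ c0])
      have hx: "Hnorm \<alpha> \<beta> x = sqrt Sx" unfolding Hnorm_def Sx_def ..
      have hy: "L2norm y = sqrt Sy" unfolding L2norm_def Sy_def ..
      have p: "sqrt Sx + sqrt \<mu> * sqrt Sy \<le> R" using xy hx hy by simp
      have p0: "0 \<le> sqrt Sx" "0 \<le> sqrt \<mu> * sqrt Sy" using mu0 Sx0 Sy0 by auto
      have "Sx + \<mu> * Sy = (sqrt Sx)\<^sup>2 + (sqrt \<mu> * sqrt Sy)\<^sup>2"
        using Sx0 Sy0 mu0 by (simp add: power_mult_distrib)
      also have "\<dots> \<le> (sqrt Sx + sqrt \<mu> * sqrt Sy)\<^sup>2"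
        using p0 by (simp add: power2_sum)
      also have "\<dots> \<le> R\<^sup>2" using p p0 by (intro power_mono) auto
      finally show "Sx + \<mu> * Sy \<le> R\<^sup>2" .
    qed
    also have "\<dots> \<le> \<epsilon>\<^sup>2"
    proof -
      have "8 * \<mu>\<^sup>2 * N\<^sup>2 / a0 powr \<beta> + 18 * \<mu> + 8 * \<mu>\<^sup>2 * N \<le> \<mu> * K"
      proof -
        have m2: "\<mu>\<^sup>2 \<le> \<mu>" using mu0 mu1 by (simp add: power2_eq_square mult_left_le_one_le)
        have "8 * \<mu>\<^sup>2 * N\<^sup>2 / a0 powr \<beta> \<le> 8 * \<mu> * N\<^sup>2 / a0 powr \<beta>"
          using m2 a0 by (intro divide_right_mono mult_right_mono) auto
        moreover have "8 * \<mu>\<^sup>2 * N \<le> 8 * \<mu> * N" using m2 N0 by simp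
        ultimately show ?thesis unfolding K_def by (simp add: algebra_simps)
      qed
      hence "c * R\<^sup>2 \<le> (4 / N powr \<beta> + 2 / N + \<mu> * K) * R\<^sup>2"
        unfolding c_def by (intro mult_right_mono) auto
      also have "\<dots> = 4 / N powr \<beta> * R\<^sup>2 + 2 / N * R\<^sup>2 + \<mu> * (K * R\<^sup>2)" by (simp add: algebra_simps)
      also have "\<mu> * (K * R\<^sup>2) \<le> \<epsilon>\<^sup>2 / 2"
      proof -
        have "\<mu> * (K * R\<^sup>2) \<le> \<epsilon>\<^sup>2 / (2 * K * R\<^sup>2) * (K * R\<^sup>2)"
          using muK K0 R by (intro mult_right_mono) auto
        also have "\<dots> = \<epsilon>\<^sup>2 / 2" using K0 R by (simp add: field_simps)
        finally show ?thesis .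
      qed
      finally show ?thesis using NM1 NM2 by linarith
    qed
    finally have "(\<Sum>k. (w k)\<^sup>2) \<le> \<epsilon>\<^sup>2" .
    hence "sqrt (\<Sum>k. (w k)\<^sup>2) \<le> sqrt (\<epsilon>\<^sup>2)" by (rule real_sqrt_le_mono)
    thus "L2norm (\<lambda>k. fst (damped_group \<alpha> \<mu> t (x, y)) k - heat_sg \<alpha> t x k) \<le> \<epsilon>"
      unfolding L2norm_def w_def[symmetric] using ep by simp
  qed
qed

end
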